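(* Let $n,m$ be positive integers, let ${\cal P}$ be an additive hereditary graph class with ${\cal P}\subseteq Free(K_n)$, and let ${\cal Q}$ be a hereditary graph class whose complement class $\overline{{\cal Q}}$ is additive, with ${\cal Q}\subseteq Free(\overline{K}_m)$. Then there exists a constant $\tau=\tau({\cal P},{\cal Q})$ such that for every graph $G=(V,E)\in{\cal P}\circ{\cal Q}$ and every subset $B\subseteq V$ with $G[B]\in{\cal P}$, at least one of the following holds: (a) there is a subset $A\subseteq V$ such that $G[A]\in{\cal P}$, $G[V\setminus A]\in{\cal Q}$, and $|A\setminus B|\le\tau$; (b) there is a subset $C\subseteq V$ such that $G[C]\in{\cal P}$, $|C|=|B|+1$, and $|B\setminus C|\le\tau$.
   Context: All graphs are finite and simple; classes are closed under isomorphism. $K_n$ is the complete graph on $n$ vertices and $\overline{K}_m$ the edgeless graph on $m$ vertices. $Free(Y)$ is the class of graphs containing no induced subgraph isomorphic to a graph in $Y$. A class is hereditary if closed under vertex deletion, additive if closed under disjoint union; $\overline{{\cal Q}}=\{\overline{G}\mid G\in{\cal Q}\}$. $G[U]$ is the subgraph induced by $U$. ${\cal P}\circ{\cal Q}$ is the class of graphs $G$ whose vertex set can be partitioned into $V_1,V_2$ with $G[V_1]\in{\cal P}$, $G[V_2]\in{\cal Q}$. *)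

theory Defs
  imports Main
begin

text \<open>A (finite simple) graph: a vertex set and a symmetric irreflexive edge relation
on it. Vertices are natural numbers; since graph classes are closed under isomorphism,
this loses no generality.\<close>

type_synonym graph = "nat set \<times> (nat \<times> nat) set"

definition verts :: "graph \<Rightarrow> nat set" where "verts G = fst G"
definition edges :: "graph \<Rightarrow> (nat \<times> nat) set" where "edges G = snd G"

definition wf_graph :: "graph \<Rightarrow> bool" where
  "wf_graph G \<longleftrightarrow> finite (verts G) \<and> edges G \<subseteq> verts G \<times> verts G
     \<and> (\<forall>x y. (x, y) \<in> edges G \<longrightarrow> (y, x) \<in> edges G)
     \<and> (\<forall>x. (x, x) \<notin> edges G)"

definition graph_iso :: "graph \<Rightarrow> graph \<Rightarrow> bool" where
  "graph_iso G H \<longleftrightarrow> (\<exists>f. bij_betw f (verts G) (verts H) \<and>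
     (\<forall>x\<in>verts G. \<forall>y\<in>verts G. (x, y) \<in> edges G \<longleftrightarrow> (f x, f y) \<in> edges H))"

definition induced :: "graph \<Rightarrow> nat set \<Rightarrow> graph" where
  "induced G U = (verts G \<inter> U, edges G \<inter> (U \<times> U))"

definition complement :: "graph \<Rightarrow> graph" where
  "complement G = (verts G, {(x, y). x \<in> verts G \<and> y \<in> verts G \<and> x \<noteq> y \<and> (x, y) \<notin> edges G})"

definition disj_union :: "graph \<Rightarrow> graph \<Rightarrow> graph" where
  "disj_union G H = (verts G \<union> verts H, edges G \<union> edges H)"

definition graph_class :: "graph set \<Rightarrow> bool" where
  "graph_class P \<longleftrightarrow> (\<forall>G\<in>P. wf_graph G) \<and>
     (\<forall>G H. G \<in> P \<longrightarrow> wf_graph H \<longrightarrow> graph_iso G H \<longrightarrow> H \<in> P)"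

definition hereditary :: "graph set \<Rightarrow> bool" where
  "hereditary P \<longleftrightarrow> (\<forall>G\<in>P. \<forall>U. U \<subseteq> verts G \<longrightarrow> induced G U \<in> P)"

definition additive :: "graph set \<Rightarrow> bool" where
  "additive P \<longleftrightarrow> (\<forall>G\<in>P. \<forall>H\<in>P. verts G \<inter> verts H = {} \<longrightarrow> disj_union G H \<in> P)"

definition compl_class :: "graph set \<Rightarrow> graph set" where
  "compl_class Q = complement ` Q"

definition complete_graph :: "nat \<Rightarrow> graph" ("K\<^sub>_") where
  "complete_graph n = ({0..<n}, {(x, y). x < n \<and> y < n \<and> x \<noteq> y})"

definition edgeless_graph :: "nat \<Rightarrow> graph" where
  "edgeless_graph m = ({0..<m}, {})"

definition Free :: "graph set \<Rightarrow> graph set" where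
  "Free Y = {G. wf_graph G \<and> \<not> (\<exists>U \<subseteq> verts G. \<exists>H\<in>Y. graph_iso (induced G U) H)}"

definition compose :: "graph set \<Rightarrow> graph set \<Rightarrow> graph set" (infixl "\<circ>\<^sub>G" 65) where
  "compose P Q = {G. wf_graph G \<and> (\<exists>V1 V2. V1 \<union> V2 = verts G \<and> V1 \<inter> V2 = {}
      \<and> induced G V1 \<in> P \<and> induced G V2 \<in> Q)}"

end

theory Submission
  imports Defs "HOL-Library.Ramsey"
begin

hide_const (open) FuncSet.compose

lemma induced_induced:
  assumes "U \<subseteq> B" shows "induced (induced G B) U = induced G U"
  using assms by (auto simp: induced_def verts_def edges_def)

lemma verts_induced: "verts (induced G U) = verts G \<inter> U"
  by (simp add: induced_def verts_def)

lemma edges_induced: "edges (induced G U) = edges G \<inter> (U \<times> U)"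
  by (simp add: induced_def edges_def)

lemma iso_aux:
  assumes fin: "finite R" and R: "R \<subseteq> verts H"
    and e: "\<forall>x\<in>R. \<forall>y\<in>R. (x, y) \<in> edges H \<longleftrightarrow> Q (x \<noteq> y)"
  shows "graph_iso (induced H R) ({0..<card R}, {(x, y). x < card R \<and> y < card R \<and> Q (x \<noteq> y)})"
proof -
  obtain h where h: "bij_betw h {0..<card R} R" using ex_bij_betw_nat_finite[OF fin] by blast
  define f where "f = inv_into {0..<card R} h"
  have bf: "bij_betw f R {0..<card R}" unfolding f_def by (rule bij_betw_inv_into[OF h])
  have vR: "verts (induced H R) = R" using R by (auto simp: verts_induced)
  show ?thesis unfolding graph_iso_def
  proof (intro exI[of _ f] conjI)
    show "bij_betw f (verts (induced H R)) (verts ({0..<card R}, {(x, y). x < card R \<and> y < card R \<and> Q (x \<noteq> y)}))"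
      using bf vR by (simp add: verts_def)
    show "\<forall>x\<in>verts (induced H R). \<forall>y\<in>verts (induced H R). ((x, y) \<in> edges (induced H R)) =
        ((f x, f y) \<in> edges ({0..<card R}, {(x, y). x < card R \<and> y < card R \<and> Q (x \<noteq> y)}))"
    proof (intro ballI)
      fix x y assume x: "x \<in> verts (induced H R)" and y: "y \<in> verts (induced H R)"
      hence xR: "x \<in> R" and yR: "y \<in> R" using vR by auto
      have fx: "f x < card R" "f y < card R" using bf xR yR bij_betwE by fastforce+
      have "(f x \<noteq> f y) = (x \<noteq> y)" using bf xR yR by (metis bij_betw_def inj_on_def)
      then show "((x, y) \<in> edges (induced H R)) =
        ((f x, f y) \<in> edges ({0..<card R}, {(x, y). x < card R \<and> y < card R \<and> Q (x \<noteq> y)}))"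
        using e xR yR fx by (simp add: edges_induced) (simp add: edges_def)
    qed
  qed
qed

lemma bounded_PQ:
  assumes "n > 0" "m > 0"
  shows "\<exists>r::nat. \<forall>H. H \<in> Free {complete_graph n} \<longrightarrow> H \<in> Free {edgeless_graph m} \<longrightarrow> card (verts H) < r"
proof -
  obtain r where r: "\<forall>(V::nat set) (E::nat set set). finite V \<and> card V \<ge> r \<longrightarrow>
    (\<exists>R \<subseteq> V. card R = n \<and> clique R E \<or> card R = m \<and> indep R E)"
    using ramsey2 by blast
  show ?thesis
  proof (intro exI[of _ r] allI impI)
    fix H assume H1: "H \<in> Free {complete_graph n}" and H2: "H \<in> Free {edgeless_graph m}"
    have wf: "wf_graph H" using H1 by (simp add: Free_def)
    show "card (verts H) < r"
    proof (rule ccontr)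
      assume "\<not> card (verts H) < r"
      then obtain R where R: "R \<subseteq> verts H" and
        c: "card R = n \<and> clique R {{x, y} |x y. (x, y) \<in> edges H} \<or> card R = m \<and> indep R {{x, y} |x y. (x, y) \<in> edges H}"
        using r[rule_format, of "verts H" "{{x,y} | x y. (x,y) \<in> edges H}"] wf
        by (auto simp: wf_graph_def)
      have fin: "finite R" using R wf finite_subset by (auto simp: wf_graph_def)
      have sym: "\<And>x y. (x, y) \<in> edges H \<Longrightarrow> (y, x) \<in> edges H" and irr: "\<And>x. (x,x) \<notin> edges H"
        using wf by (auto simp: wf_graph_def)
      have pe: "\<And>v w. {v, w} \<in> {{x, y} |x y. (x, y) \<in> edges H} \<longleftrightarrow> (v, w) \<in> edges H"
        using sym by (auto simp: doubleton_eq_iff)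
      show False
        using c
      proof
        assume a: "card R = n \<and> clique R {{x, y} |x y. (x, y) \<in> edges H}"
        have "\<forall>x\<in>R. \<forall>y\<in>R. (x, y) \<in> edges H \<longleftrightarrow> id (x \<noteq> y)"
          using a irr pe unfolding clique_def by auto
        from iso_aux[OF fin R this] a have "graph_iso (induced H R) (complete_graph n)"
          by (simp add: complete_graph_def)
        thus False using H1 R by (auto simp: Free_def)
      next
        assume a: "card R = m \<and> indep R {{x, y} |x y. (x, y) \<in> edges H}"
        have "\<forall>x\<in>R. \<forall>y\<in>R. (x, y) \<in> edges H \<longleftrightarrow> (\<lambda>_. False) (x \<noteq> y)"
          using a irr pe unfolding indep_def by (metis (mono_tags, lifting))
        from iso_aux[OF fin R this] a have "graph_iso (induced H R) (edgeless_graph m)"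
          by (simp add: edgeless_graph_def)
        thus False using H2 R by (auto simp: Free_def)
      qed
    qed
  qed
qed

theorem lemma3:
  fixes n m :: nat and P Q :: "graph set"
  assumes "n > 0" and "m > 0"
    and "graph_class P" and "additive P" and "hereditary P"
    and "P \<subseteq> Free {complete_graph n}"
    and "graph_class Q" and "hereditary Q" and "additive (compl_class Q)"
    and "Q \<subseteq> Free {edgeless_graph m}"
  shows "\<exists>\<tau>::nat. \<forall>G \<in> compose P Q. \<forall>B. B \<subseteq> verts G \<longrightarrow> induced G B \<in> P \<longrightarrow>
           (\<exists>A. A \<subseteq> verts G \<and> induced G A \<in> P \<and> induced G (verts G - A) \<in> Q
                 \<and> card (A - B) \<le> \<tau>)
         \<or> (\<exists>C. C \<subseteq> verts G \<and> induced G C \<in> P \<and> card C = card B + 1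
                 \<and> card (B - C) \<le> \<tau>)"
proof -
  obtain r where r: "\<And>H. H \<in> Free {complete_graph n} \<Longrightarrow> H \<in> Free {edgeless_graph m} \<Longrightarrow> card (verts H) < r"
    using bounded_PQ[OF assms(1,2)] by blast
  have hP: "\<And>G U. G \<in> P \<Longrightarrow> U \<subseteq> verts G \<Longrightarrow> induced G U \<in> P"
    using assms(5) by (simp add: hereditary_def)
  have hQ: "\<And>G U. G \<in> Q \<Longrightarrow> U \<subseteq> verts G \<Longrightarrow> induced G U \<in> Q"
    using assms(8) by (simp add: hereditary_def)
  show ?thesis
  proof (intro exI[of _ r] ballI allI impI)
    fix G B assume G: "G \<in> compose P Q" and B: "B \<subseteq> verts G" and BP: "induced G B \<in> P"
    obtain V1 V2 where V: "V1 \<union> V2 = verts G" "V1 \<inter> V2 = {}" "induced G V1 \<in> P" "induced G V2 \<in> Q"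
      and wf: "wf_graph G"
      using G unfolding Defs.compose_def by blast
    have finG: "finite (verts G)" using wf by (simp add: wf_graph_def)
    define D where "D = B \<inter> V2"
    have "induced (induced G B) D \<in> P" using hP[OF BP, of D] B by (auto simp: D_def verts_induced)
    hence DP: "induced G D \<in> P" by (simp add: induced_induced D_def)
    have "induced (induced G V2) D \<in> Q" using hQ[OF V(4), of D] V(1) B by (auto simp: D_def verts_induced)
    hence DQ: "induced G D \<in> Q" by (simp add: induced_induced D_def)
    have vD: "verts (induced G D) = D" using B by (auto simp: D_def verts_induced)
    have cD: "card D < r" using r[of "induced G D"] DP DQ assms(6,10) vD by auto
    show "(\<exists>A. A \<subseteq> verts G \<and> induced G A \<in> P \<and> induced G (verts G - A) \<in> Q \<and> card (A - B) \<le> r)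
         \<or> (\<exists>C. C \<subseteq> verts G \<and> induced G C \<in> P \<and> card C = card B + 1 \<and> card (B - C) \<le> r)"
    proof (cases "card (V1 - B) \<le> r")
      case True
      have "verts G - V1 = V2" using V by auto
      then show ?thesis using True V by (intro disjI1 exI[of _ V1]) auto
    next
      case False
      obtain S where S: "S \<subseteq> V1 - B" "card S = card D + 1"
        using obtain_subset_with_card_n[of "card D + 1" "V1 - B"] False cD by auto
      define C where "C = (B \<inter> V1) \<union> S"
      have CV1: "C \<subseteq> V1" using S by (auto simp: C_def)
      have "induced (induced G V1) C \<in> P" using hP[OF V(3), of C] CV1 V(1) by (auto simp: verts_induced)
      hence CP: "induced G C \<in> P" using CV1 by (simp add: induced_induced)
      have fin: "finite (B \<inter> V1)" "finite S" "finite D"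
      proof -
        have "V1 \<subseteq> verts G" using V(1) by auto
        thus "finite (B \<inter> V1)" "finite S" "finite D"
          using finG B S(1) by (auto simp: D_def intro: finite_subset)
      qed
      have "card C = card (B \<inter> V1) + card S" unfolding C_def
        using fin S(1) by (intro card_Un_disjoint) auto
      moreover have "card B = card (B \<inter> V1) + card D"
      proof -
        have "B = (B \<inter> V1) \<union> D" using B V(1) by (auto simp: D_def)
        moreover have "(B \<inter> V1) \<inter> D = {}" using V(2) by (auto simp: D_def)
        ultimately show ?thesis using fin by (metis card_Un_disjoint)
      qed
      moreover have "B - C = D" using B V S(1) by (auto simp: C_def D_def)
      ultimately show ?thesis using CP CV1 V(1) S(2) cD
        by (intro disjI2 exI[of _ C]) auto
    qed
  qed
qed

end
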